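(* Let $\mathcal{X}$ be a finite alphabet with $|\mathcal{X}|\ge 2$, let $P$ be a pmf on $\mathcal{X}$, and let $X_0,X_1,X_2,\dots$ be i.i.d. with law $P$. Let $e:\mathcal{X}\to\{0,1\}^*$ be a prefix-free code with codeword lengths $\ell(x)=|e(x)|\ge 1$, and let $L=\ell(X)$ with $X\sim P$. For the memoryless update scheme defined in the context, the average age satisfies, almost surely, $$\bar A(e)=\mathbb{E}[L]+\frac{\mathbb{E}[L^2]}{2\,\mathbb{E}[L]}-\frac12 .$$
   Context: Memoryless update scheme: the transmitter sends one bit per unit time over a noiseless channel. Set $s_0=0$ and recursively $s_k=s_{k-1}+\ell(X_{s_{k-1}})$ for $k\ge1$: at time $s_{k-1}$ the channel is free, the transmitter takes the current symbol $X_{s_{k-1}}$, and its codeword $e(X_{s_{k-1}})$ is completely received at time $s_k$; symbols $X_t$ arriving while the channel is busy are never sent. The receiver's time index is $U(t)=0$ for $0\le t<s_1$ and $U(t)=s_{k-1}$ for $s_k\le t<s_{k+1}$, $k\ge1$ (i.e. the receiver outputs the most recent fully received symbol, which was observed at time $U(t)$). The age is $A(t)=t-U(t)$ and the average age is $\bar A(e)=\limsup_{T\to\infty}\frac1T\sum_{t=1}^T A(t)$. *)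

theory Defs
  imports "HOL-Probability.Probability" "HOL-Library.Sublist"
begin

definition prefix_free_code :: "('a \<Rightarrow> bool list) \<Rightarrow> bool" where
  "prefix_free_code e \<longleftrightarrow> (\<forall>x y. x \<noteq> y \<longrightarrow> \<not> prefix (e x) (e y))"

text \<open>Transmission completion times: s 0 = 0, s k = s (k-1) + length (e (xs (s (k-1)))).\<close>
primrec sched :: "('a \<Rightarrow> bool list) \<Rightarrow> (nat \<Rightarrow> 'a) \<Rightarrow> nat \<Rightarrow> nat" where
  "sched e xs 0 = 0"
| "sched e xs (Suc k) = sched e xs k + length (e (xs (sched e xs k)))"

definition recv_index :: "('a \<Rightarrow> bool list) \<Rightarrow> (nat \<Rightarrow> 'a) \<Rightarrow> nat \<Rightarrow> nat" where
  "recv_index e xs t =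
     (if t < sched e xs 1 then 0
      else sched e xs ((THE k. 1 \<le> k \<and> sched e xs k \<le> t \<and> t < sched e xs (Suc k)) - 1))"

definition age :: "('a \<Rightarrow> bool list) \<Rightarrow> (nat \<Rightarrow> 'a) \<Rightarrow> nat \<Rightarrow> real" where
  "age e xs t = real t - real (recv_index e xs t)"

definition avg_age :: "('a \<Rightarrow> bool list) \<Rightarrow> (nat \<Rightarrow> 'a) \<Rightarrow> ereal" where
  "avg_age e xs = limsup (\<lambda>T. ereal ((1 / real T) * (\<Sum>t=1..T. age e xs t)))"

end

theory Submission
  imports Defs
begin

definition tt :: "('a \<Rightarrow> bool list) \<Rightarrow> (nat \<Rightarrow> 'a) \<Rightarrow> nat \<Rightarrow> nat" where
  "tt e a k = (\<Sum>i<k. length (e (a i)))"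

lemma sched_tt:
  assumes "\<forall>k<n. xs (sched e xs k) = a k" "k \<le> n"
  shows "sched e xs k = tt e a k"
  using assms(2)
proof (induction k)
  case 0 then show ?case by (simp add: tt_def)
next
  case (Suc k)
  then have h: "sched e xs k = tt e a k" by simp
  have "xs (sched e xs k) = a k" using assms(1) Suc.prems by simp
  then have "xs (tt e a k) = a k" using h by simp
  then show ?case using h by (simp add: tt_def)
qed

lemma cyl_eq:
  "(\<forall>k<n. xs (sched e xs k) = a k) \<longleftrightarrow> (\<forall>k<n. xs (tt e a k) = a k)"
proof (induction n)
  case 0 then show ?case by simp
next
  case (Suc n)
  show ?case
  proof
    assume H: "\<forall>k<Suc n. xs (sched e xs k) = a k"
    then have "\<forall>k<n. xs (sched e xs k) = a k" by simp
    then show "\<forall>k<Suc n. xs (tt e a k) = a k"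
      using H sched_tt[of "Suc n" xs e a] by (metis less_imp_le)
  next
    assume H: "\<forall>k<Suc n. xs (tt e a k) = a k"
    then have "\<forall>k<n. xs (sched e xs k) = a k" using Suc by simp
    moreover have "sched e xs n = tt e a n" using sched_tt[OF calculation] by simp
    ultimately show "\<forall>k<Suc n. xs (sched e xs k) = a k" using H by (auto simp: less_Suc_eq)
  qed
qed

lemma tt_strict:
  assumes "\<And>x. 1 \<le> length (e x)"
  shows "strict_mono (tt e a)"
proof -
  have "e x \<noteq> []" for x using assms[of x] by auto
  then show ?thesis by (simp add: strict_mono_Suc_iff tt_def)
qed


locale prb = prob_space M for M :: "'w measure" +
  fixes X :: "nat \<Rightarrow> 'w \<Rightarrow> 'a::finite" and P :: "'a pmf" and e :: "'a \<Rightarrow> bool list"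
  assumes indX: "indep_vars (\<lambda>_. count_space UNIV) X UNIV"
    and distrX: "\<And>t. distr M (count_space UNIV) (X t) = measure_pmf P"
    and len: "\<And>x. 1 \<le> length (e x)"
begin

definition Y where "Y k \<omega> = X (sched e (\<lambda>t. X t \<omega>) k) \<omega>"

lemma X_meas[measurable]: "X t \<in> M \<rightarrow>\<^sub>M count_space UNIV"
  using indX by (auto simp: indep_vars_def)

lemma sched_meas[measurable]: "(\<lambda>\<omega>. sched e (\<lambda>t. X t \<omega>) k) \<in> M \<rightarrow>\<^sub>M count_space UNIV"
proof (induction k)
  case 0 then show ?case by simp
next
  case (Suc k)
  have "(\<lambda>\<omega>. (\<lambda>i \<omega>. i + length (e (X i \<omega>))) (sched e (\<lambda>t. X t \<omega>) k) \<omega>) \<in> M \<rightarrow>\<^sub>M count_space UNIV"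
  proof (rule measurable_compose_countable[OF _ Suc])
    fix i :: nat
    show "(\<lambda>\<omega>. i + length (e (X i \<omega>))) \<in> M \<rightarrow>\<^sub>M count_space UNIV"
      by (rule measurable_compose[OF X_meas]) simp
  qed
  then show ?case by simp
qed

lemma Y_meas[measurable]: "Y k \<in> M \<rightarrow>\<^sub>M count_space UNIV"
proof -
  have "(\<lambda>\<omega>. (\<lambda>i \<omega>. X i \<omega>) (sched e (\<lambda>t. X t \<omega>) k) \<omega>) \<in> M \<rightarrow>\<^sub>M count_space UNIV"
    by (rule measurable_compose_countable[OF _ sched_meas]) simp
  then show ?thesis by (simp add: Y_def[abs_def])
qed

lemma prob_X: "prob (X t -` A \<inter> space M) = measure_pmf.prob P A"
proof -
  have "measure (distr M (count_space UNIV) (X t)) A = measure M (X t -` A \<inter> space M)"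
    by (rule measure_distr) auto
  then show ?thesis using distrX[of t] by simp
qed

lemma cyl_prob: "prob {\<omega>\<in>space M. \<forall>k<n. Y k \<omega> = a k} = (\<Prod>k<n. pmf P (a k))"
proof (cases "n = 0")
  case True then show ?thesis by (simp add: prob_space)
next
  case False
  let ?t = "tt e a"
  have inj: "inj_on ?t {..<n}" by (rule strict_mono_imp_inj_on[OF tt_strict[OF len]])
  define A where "A j = {a (the_inv_into {..<n} ?t j)}" for j
  have Ak: "A (?t k) = {a k}" if "k < n" for k
    unfolding A_def using the_inv_into_f_f[OF inj, of k] that by simp
  have c: "(\<forall>k<n. Y k \<omega> = a k) \<longleftrightarrow> (\<forall>k<n. X (?t k) \<omega> = a k)" for \<omega>
    unfolding Y_def by (rule cyl_eq[of n "\<lambda>t. X t \<omega>" e a])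
  have i: "(\<Inter>j\<in>?t ` {..<n}. X j -` A j \<inter> space M) = (\<Inter>k\<in>{..<n}. X (?t k) -` {a k} \<inter> space M)"
    unfolding image_image by (intro INF_cong refl) (auto simp: Ak)
  have "{\<omega>\<in>space M. \<forall>k<n. Y k \<omega> = a k} = {\<omega>\<in>space M. \<forall>k<n. X (?t k) \<omega> = a k}"
    using c by blast
  also have "\<dots> = (\<Inter>j\<in>?t ` {..<n}. X j -` A j \<inter> space M)"
    unfolding i using False by blast
  finally have eq: "{\<omega>\<in>space M. \<forall>k<n. Y k \<omega> = a k} = (\<Inter>j\<in>?t ` {..<n}. X j -` A j \<inter> space M)" .
  have "prob (\<Inter>j\<in>?t ` {..<n}. X j -` A j \<inter> space M) = (\<Prod>j\<in>?t ` {..<n}. prob (X j -` A j \<inter> space M))"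
    by (rule indep_varsD[OF indX]) (use False in auto)
  also have "\<dots> = (\<Prod>k<n. prob (X (?t k) -` A (?t k) \<inter> space M))"
    by (subst prod.reindex[OF inj]) simp
  also have "\<dots> = (\<Prod>k<n. pmf P (a k))"
    by (rule prod.cong[OF refl]) (simp add: Ak prob_X measure_pmf_single)
  finally show ?thesis using eq by simp
qed

lemma set_prob: "prob {\<omega>\<in>space M. \<forall>k<n. Y k \<omega> \<in> B k} = (\<Prod>k<n. measure_pmf.prob P (B k))"
proof -
  define C where "C a = {\<omega>\<in>space M. \<forall>k<n. Y k \<omega> = a k}" for a
  have eq: "{\<omega>\<in>space M. \<forall>k<n. Y k \<omega> \<in> B k} = (\<Union>a\<in>PiE {..<n} B. C a)"
  proof safe
    fix \<omega> assume "\<omega> \<in> space M" "\<forall>k<n. Y k \<omega> \<in> B k"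
    then show "\<omega> \<in> (\<Union>a\<in>PiE {..<n} B. C a)"
      by (intro UN_I[of "restrict (\<lambda>k. Y k \<omega>) {..<n}"]) (auto simp: C_def)
  qed (auto simp: C_def PiE_def Pi_def)
  have C_sets: "C a \<in> sets M" for a unfolding C_def by measurable
  have disj: "disjoint_family_on C (PiE {..<n} B)"
    unfolding disjoint_family_on_def
  proof (intro ballI impI)
    fix a b assume ab: "a \<in> PiE {..<n} B" "b \<in> PiE {..<n} B" "a \<noteq> b"
    then obtain k where "k < n" "a k \<noteq> b k"
      by (meson PiE_ext lessThan_iff)
    then show "C a \<inter> C b = {}" by (auto simp: C_def)
  qed
  have "prob (\<Union>a\<in>PiE {..<n} B. C a) = (\<Sum>a\<in>PiE {..<n} B. prob (C a))"
    by (rule finite_measure_finite_Union) (auto intro: C_sets disj finite_PiE)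
  also have "\<dots> = (\<Sum>a\<in>PiE {..<n} B. \<Prod>k<n. pmf P (a k))"
    unfolding C_def cyl_prob ..
  also have "\<dots> = (\<Prod>k<n. \<Sum>x\<in>B k. pmf P x)"
    by (rule prod_sum_PiE[symmetric]) auto
  also have "\<dots> = (\<Prod>k<n. measure_pmf.prob P (B k))"
    by (simp add: measure_measure_pmf_finite)
  finally show ?thesis using eq by simp
qed

lemma marg: "prob (Y j -` A \<inter> space M) = measure_pmf.prob P A"
proof -
  have eq: "Y j -` A \<inter> space M = {\<omega>\<in>space M. \<forall>k<Suc j. Y k \<omega> \<in> (if k = j then A else UNIV)}"
    by (auto simp: less_Suc_eq)
  have p1: "prob (Y j -` A \<inter> space M) = (\<Prod>k<Suc j. measure_pmf.prob P (if k = j then A else UNIV))"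
    unfolding eq by (rule set_prob)
  have "(\<Prod>k<j. measure_pmf.prob P (if k = j then A else UNIV)) = 1"
    by (rule prod.neutral) simp
  then have "(\<Prod>k<Suc j. measure_pmf.prob P (if k = j then A else UNIV)) = measure_pmf.prob P A"
    by simp
  then show ?thesis using p1 by simp
qed

end


context prb begin

lemma indY_fin:
  assumes J: "J \<noteq> {}" "finite J"
  shows "indep_vars (\<lambda>_. count_space UNIV) Y J"
proof (subst indep_vars_finite[where E="\<lambda>_. sets (count_space UNIV)"])
  show "\<forall>A\<in>Pi J (\<lambda>_. sets (count_space UNIV)).
          prob (\<Inter>j\<in>J. Y j -` A j \<inter> space M) = (\<Prod>j\<in>J. prob (Y j -` A j \<inter> space M))"
  proof
    fix A assume "A \<in> Pi J (\<lambda>_. sets (count_space (UNIV :: 'a set)))"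
    define n where "n = Suc (Max J)"
    define B where "B k = (if k \<in> J then A k else UNIV)" for k
    have Jn: "j \<in> J \<Longrightarrow> j < n" for j using J unfolding n_def by (simp add: le_imp_less_Suc)
    have eq1: "(\<Inter>j\<in>J. Y j -` A j \<inter> space M) = {\<omega>\<in>space M. \<forall>j\<in>J. Y j \<omega> \<in> A j}"
      using J by auto
    have eq2: "{\<omega>\<in>space M. \<forall>j\<in>J. Y j \<omega> \<in> A j} = {\<omega>\<in>space M. \<forall>k<n. Y k \<omega> \<in> B k}"
      by (auto simp: B_def dest: Jn)
    note eq = trans[OF eq1 eq2]
    have "prob (\<Inter>j\<in>J. Y j -` A j \<inter> space M) = (\<Prod>k<n. measure_pmf.prob P (B k))"
      unfolding eq by (rule set_prob)
    also have "\<dots> = (\<Prod>k<n. if k \<in> J then measure_pmf.prob P (A k) else 1)"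
      by (rule prod.cong[OF refl]) (simp add: B_def)
    also have "\<dots> = (\<Prod>k\<in>{..<n} \<inter> J. measure_pmf.prob P (A k))"
      by (rule prod.inter_restrict[symmetric]) simp
    also have "{..<n} \<inter> J = J" using Jn by auto
    also have "(\<Prod>k\<in>J. measure_pmf.prob P (A k)) = (\<Prod>j\<in>J. prob (Y j -` A j \<inter> space M))"
      by (simp add: marg)
    finally show "prob (\<Inter>j\<in>J. Y j -` A j \<inter> space M) = (\<Prod>j\<in>J. prob (Y j -` A j \<inter> space M))" .
  qed
qed (use J in \<open>auto simp: Int_stable_def\<close>)

lemma indY: "indep_vars (\<lambda>_. count_space UNIV) Y UNIV"
proof -
  have "indep_sets (\<lambda>i. sigma_sets (space M) {Y i -` A \<inter> space M |A. A \<in> sets (count_space UNIV)}) UNIV"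
  proof (subst indep_sets_finite_index_sets, intro allI impI)
    fix J :: "nat set" assume "J \<subseteq> UNIV" "J \<noteq> {}" "finite J"
    then show "indep_sets (\<lambda>i. sigma_sets (space M) {Y i -` A \<inter> space M |A. A \<in> sets (count_space UNIV)}) J"
      using indY_fin unfolding indep_vars_def by blast
  qed
  then show ?thesis unfolding indep_vars_def by simp
qed

lemma pair_prob: "prob {\<omega>\<in>space M. Y k \<omega> = x \<and> Y (Suc k) \<omega> = y} = pmf P x * pmf P y"
proof -
  define B where "B i = (if i = k then {x} else if i = Suc k then {y} else UNIV)" for i
  have eq: "{\<omega>\<in>space M. Y k \<omega> = x \<and> Y (Suc k) \<omega> = y} = {\<omega>\<in>space M. \<forall>i<Suc (Suc k). Y i \<omega> \<in> B i}"
    by (auto simp: B_def less_Suc_eq)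
  have p: "(\<Prod>i<k. measure_pmf.prob P (B i)) = 1"
    by (rule prod.neutral) (simp add: B_def)
  show ?thesis unfolding eq set_prob using p by (simp add: B_def measure_pmf_single)
qed

lemma exp_pair:
  "expectation (\<lambda>\<omega>. h (Y k \<omega>) (Y (Suc k) \<omega>)) = (\<Sum>x\<in>UNIV. \<Sum>y\<in>UNIV. pmf P x * pmf P y * h x y)"
proof -
  define S where "S x y = {\<omega>\<in>space M. Y k \<omega> = x \<and> Y (Suc k) \<omega> = y}" for x y
  have S_sets[measurable]: "S x y \<in> sets M" for x y unfolding S_def by measurable
  have intS: "integrable M (\<lambda>\<omega>. h x y * indicator (S x y) \<omega>)" for x y
  proof -
    have "integrable M (indicator (S x y) :: 'w \<Rightarrow> real)"
      using S_sets by (simp add: less_top[symmetric])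
    then show ?thesis by simp
  qed
  have pt: "h (Y k \<omega>) (Y (Suc k) \<omega>) = (\<Sum>x\<in>UNIV. \<Sum>y\<in>UNIV. h x y * indicator (S x y) \<omega>)"
    if "\<omega> \<in> space M" for \<omega>
  proof -
    have "(\<Sum>x\<in>UNIV. \<Sum>y\<in>UNIV. h x y * indicator (S x y) \<omega>) =
          (\<Sum>x\<in>UNIV. if x = Y k \<omega> then (\<Sum>y\<in>UNIV. if y = Y (Suc k) \<omega> then h x y else 0) else 0)"
      by (rule sum.cong[OF refl]) (auto simp: S_def indicator_def that)
    also have "\<dots> = h (Y k \<omega>) (Y (Suc k) \<omega>)" by simp
    finally show ?thesis ..
  qed
  have "expectation (\<lambda>\<omega>. h (Y k \<omega>) (Y (Suc k) \<omega>)) =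
        expectation (\<lambda>\<omega>. \<Sum>x\<in>UNIV. \<Sum>y\<in>UNIV. h x y * indicator (S x y) \<omega>)"
    by (rule Bochner_Integration.integral_cong[OF refl]) (rule pt)
  also have "\<dots> = (\<Sum>x\<in>UNIV. expectation (\<lambda>\<omega>. \<Sum>y\<in>UNIV. h x y * indicator (S x y) \<omega>))"
    by (rule Bochner_Integration.integral_sum) (rule Bochner_Integration.integrable_sum, rule intS)
  also have "\<dots> = (\<Sum>x\<in>UNIV. \<Sum>y\<in>UNIV. expectation (\<lambda>\<omega>. h x y * indicator (S x y) \<omega>))"
    by (intro sum.cong refl Bochner_Integration.integral_sum intS)
  also have "\<dots> = (\<Sum>x\<in>UNIV. \<Sum>y\<in>UNIV. h x y * prob (S x y))"
  proof -
    have "S x y \<inter> space M = S x y" for x y by (auto simp: S_def)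
    then show ?thesis by simp
  qed
  also have "\<dots> = (\<Sum>x\<in>UNIV. \<Sum>y\<in>UNIV. pmf P x * pmf P y * h x y)"
    by (simp add: S_def pair_prob mult.commute)
  finally show ?thesis .
qed

end


context prb begin

definition W where "W h k \<omega> = h (Y k \<omega>) (Y (Suc k) \<omega>)"

lemma W_meas[measurable]: "W h k \<in> borel_measurable M"
proof -
  have f: "(\<lambda>\<omega>. h x (Y (Suc k) \<omega>)) \<in> borel_measurable M" for x
    by (rule measurable_compose[OF Y_meas]) (simp add: measurable_count_space_eq1)
  have "(\<lambda>\<omega>. (\<lambda>x \<omega>. h x (Y (Suc k) \<omega>)) (Y k \<omega>) \<omega>) \<in> borel_measurable M"
    by (rule measurable_compose_countable[where f="\<lambda>x \<omega>. h x (Y (Suc k) \<omega>)", OF f Y_meas])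
  then show ?thesis by (simp add: W_def[abs_def])
qed

lemma indW:
  assumes S: "\<And>k. k \<in> S \<Longrightarrow> Suc k \<notin> S"
  shows "indep_vars (\<lambda>_. borel) (W h) S"
proof -
  have d: "disjoint_family_on (\<lambda>k. {k, Suc k}) S"
    unfolding disjoint_family_on_def by (auto dest: S)
  have r: "indep_vars (\<lambda>k. PiM {k, Suc k} (\<lambda>_. count_space UNIV)) (\<lambda>k \<omega>. restrict (\<lambda>i. Y i \<omega>) {k, Suc k}) S"
    by (rule indep_vars_restrict[OF indY]) (auto simp: d)
  have m: "(\<lambda>r. h (r k) (r (Suc k))) \<in> PiM {k, Suc k} (\<lambda>_. count_space UNIV) \<rightarrow>\<^sub>M borel" for k
  proof -
    have f: "(\<lambda>r. h x (r (Suc k))) \<in> PiM {k, Suc k} (\<lambda>_. count_space UNIV) \<rightarrow>\<^sub>M borel" for x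
      by (rule measurable_compose[OF measurable_component_singleton]) (auto simp: measurable_count_space_eq1)
    have g: "(\<lambda>r. r k) \<in> PiM {k, Suc k} (\<lambda>_. count_space UNIV) \<rightarrow>\<^sub>M count_space UNIV"
      by (rule measurable_component_singleton) simp
    have "(\<lambda>r. (\<lambda>x r. h x (r (Suc k))) (r k) r) \<in> PiM {k, Suc k} (\<lambda>_. count_space UNIV) \<rightarrow>\<^sub>M borel"
      by (rule measurable_compose_countable[where f="\<lambda>x r. h x (r (Suc k))", OF f g])
    then show ?thesis by simp
  qed
  have "indep_vars (\<lambda>_. borel) (\<lambda>k \<omega>. (\<lambda>r. h (r k) (r (Suc k))) (restrict (\<lambda>i. Y i \<omega>) {k, Suc k})) S"
    by (rule indep_vars_compose2[OF r m])
  then show ?thesis by (simp add: W_def[abs_def])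
qed

definition mh where "mh h = (\<Sum>x\<in>UNIV. \<Sum>y\<in>UNIV. pmf P x * pmf P y * h x y)"

lemma exp_W: "expectation (W h k) = mh h"
  unfolding W_def mh_def using exp_pair by simp

lemma hoeff:
  assumes S: "\<And>k. k \<in> S \<Longrightarrow> Suc k \<notin> S" and I: "I \<subseteq> S" "finite I" "I \<noteq> {}"
    and K: "\<And>x y. \<bar>h x y\<bar> \<le> K" "0 < K" and eps: "0 \<le> \<epsilon>"
  shows "prob {\<omega>\<in>space M. \<bar>(\<Sum>i\<in>I. W h i \<omega>) - real (card I) * mh h\<bar> \<ge> \<epsilon>}
           \<le> 2 * exp (-2 * \<epsilon>\<^sup>2 / (\<Sum>i\<in>I. (K - - K)\<^sup>2))"
proof -
  interpret H: Hoeffding_ineq M I "W h" "\<lambda>_. -K" "\<lambda>_. K" "real (card I) * mh h"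
  proof unfold_locales
    show "finite I" by fact
    show "indep_vars (\<lambda>_. borel) (W h) I" by (rule indep_vars_subset[OF indW[OF S] I(1)])
    have b: "-K \<le> h x y \<and> h x y \<le> K" for x y using K(1)[of x y] by auto
    fix i show "AE x in M. W h i x \<in> {- K..K}"
      by (intro AE_I2) (simp add: W_def b)
  next
    show "real (card I) * mh h \<equiv> (\<Sum>i\<in>I. expectation (W h i))" by (simp add: exp_W)
  qed
  have cI: "0 < card I" using I by (simp add: card_gt_0_iff)
  have pos: "(\<Sum>i\<in>I. (K - - K)\<^sup>2) > 0" using cI K(2) by (simp add: zero_less_mult_iff)
  show ?thesis
    by (rule H.Hoeffding_ineq_abs_ge[OF eps pos])
qed

end


context prb begin

lemma E_bound:
  assumes S: "\<And>k. k \<in> S \<Longrightarrow> Suc k \<notin> S" and I: "I \<subseteq> S" "I \<subseteq> {..<n}"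
    and K: "\<And>x y. \<bar>h x y\<bar> \<le> K" "0 < K" and eps: "0 < \<epsilon>"
  shows "prob {\<omega>\<in>space M. real n * \<epsilon> / 2 \<le> \<bar>(\<Sum>i\<in>I. W h i \<omega>) - real (card I) * mh h\<bar>}
          \<le> 2 * exp (-(real n * \<epsilon>\<^sup>2) / (8 * K\<^sup>2))"
proof (cases "I = {}")
  case True
  show ?thesis
  proof (cases "n = 0")
    case True
    have "prob {\<omega>\<in>space M. real n * \<epsilon> / 2 \<le> \<bar>(\<Sum>i\<in>I. W h i \<omega>) - real (card I) * mh h\<bar>} \<le> 1"
      by simp
    then show ?thesis using True by (simp add: prob_space)
  next
    case False
    then have "{\<omega>\<in>space M. real n * \<epsilon> / 2 \<le> \<bar>(\<Sum>i\<in>I. W h i \<omega>) - real (card I) * mh h\<bar>} = {}"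
      using \<open>I = {}\<close> eps False by (auto simp: mult_le_0_iff)
    then have z: "prob {\<omega>\<in>space M. real n * \<epsilon> / 2 \<le> \<bar>(\<Sum>i\<in>I. W h i \<omega>) - real (card I) * mh h\<bar>} = 0"
      by (metis measure_empty)
    show ?thesis unfolding z by simp
  qed
next
  case False
  have fin: "finite I" using I(2) finite_subset by blast
  have cI: "1 \<le> card I" using False fin by (simp add: Suc_le_eq card_gt_0_iff)
  have cn: "card I \<le> n" using card_mono[OF _ I(2)] by simp
  have n1: "1 \<le> real n" using cI cn by linarith
  have "prob {\<omega>\<in>space M. real n * \<epsilon> / 2 \<le> \<bar>(\<Sum>i\<in>I. W h i \<omega>) - real (card I) * mh h\<bar>}
        \<le> 2 * exp (-2 * (real n * \<epsilon> / 2)\<^sup>2 / (\<Sum>i\<in>I. (K - - K)\<^sup>2))"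
    using hoeff[OF S I(1) fin False K, of "real n * \<epsilon> / 2"] eps by simp
  also have "(\<Sum>i\<in>I. (K - - K)\<^sup>2) = real (card I) * (4 * K\<^sup>2)"
    by (simp add: power2_eq_square)
  also have "-2 * (real n * \<epsilon> / 2)\<^sup>2 / (real (card I) * (4 * K\<^sup>2)) \<le> -(real n * \<epsilon>\<^sup>2) / (8 * K\<^sup>2)"
  proof -
    define x where "x = real n * \<epsilon>\<^sup>2 / (8 * K\<^sup>2)"
    have x0: "0 \<le> x" unfolding x_def using K(2) by simp
    have t: "1 \<le> real n / real (card I)" using cI cn by simp
    have "x = 1 * x" by simp
    also have "\<dots> \<le> (real n / real (card I)) * x" by (rule mult_right_mono[OF t x0])
    also have "\<dots> = 2 * (real n * \<epsilon> / 2)\<^sup>2 / (real (card I) * (4 * K\<^sup>2))"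
      unfolding x_def using K(2) cI by (simp add: field_simps power2_eq_square)
    finally show ?thesis unfolding x_def by simp
  qed
  then have "2 * exp (-2 * (real n * \<epsilon> / 2)\<^sup>2 / (real (card I) * (4 * K\<^sup>2))) \<le> 2 * exp (-(real n * \<epsilon>\<^sup>2) / (8 * K\<^sup>2))"
    by simp
  finally show ?thesis .
qed

lemma dev_bound:
  assumes K: "\<And>x y. \<bar>h x y\<bar> \<le> K" "0 < K" and eps: "0 < \<epsilon>"
  shows "prob {\<omega>\<in>space M. real n * \<epsilon> \<le> \<bar>(\<Sum>k<n. W h k \<omega>) - real n * mh h\<bar>}
          \<le> 4 * exp (-(real n * \<epsilon>\<^sup>2) / (8 * K\<^sup>2))"
proof -
  define I0 where "I0 = {k. k < n \<and> even k}"
  define I1 where "I1 = {k. k < n \<and> odd k}"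
  define E where "E I = {\<omega>\<in>space M. real n * \<epsilon> / 2 \<le> \<bar>(\<Sum>i\<in>I. W h i \<omega>) - real (card I) * mh h\<bar>}" for I
  have E_sets: "E I \<in> sets M" for I unfolding E_def by measurable
  have U: "{..<n} = I0 \<union> I1" "I0 \<inter> I1 = {}" "finite I0" "finite I1"
    by (auto simp: I0_def I1_def)
  have cards: "real n = real (card I0) + real (card I1)"
  proof -
    have "card {..<n} = card I0 + card I1" unfolding U(1) by (rule card_Un_disjoint) (use U in auto)
    then show ?thesis by simp
  qed
  have sums: "(\<Sum>k<n. W h k \<omega>) = (\<Sum>i\<in>I0. W h i \<omega>) + (\<Sum>i\<in>I1. W h i \<omega>)" for \<omega>
    unfolding U(1) by (rule sum.union_disjoint) (use U in auto)
  have sub: "{\<omega>\<in>space M. real n * \<epsilon> \<le> \<bar>(\<Sum>k<n. W h k \<omega>) - real n * mh h\<bar>} \<subseteq> E I0 \<union> E I1"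
  proof
    fix \<omega> assume "\<omega> \<in> {\<omega>\<in>space M. real n * \<epsilon> \<le> \<bar>(\<Sum>k<n. W h k \<omega>) - real n * mh h\<bar>}"
    then have \<omega>: "\<omega> \<in> space M" and d: "real n * \<epsilon> \<le> \<bar>(\<Sum>i\<in>I0. W h i \<omega>) + (\<Sum>i\<in>I1. W h i \<omega>) - (real (card I0) + real (card I1)) * mh h\<bar>"
      by (auto simp: sums cards)
    have "real n * \<epsilon> / 2 \<le> \<bar>(\<Sum>i\<in>I0. W h i \<omega>) - real (card I0) * mh h\<bar> \<or>
          real n * \<epsilon> / 2 \<le> \<bar>(\<Sum>i\<in>I1. W h i \<omega>) - real (card I1) * mh h\<bar>"
      using d by (auto simp: algebra_simps abs_if split: if_splits)
    then show "\<omega> \<in> E I0 \<union> E I1" using \<omega> by (auto simp: E_def)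
  qed
  have S0: "\<And>k. k \<in> {k. even k} \<Longrightarrow> Suc k \<notin> {k. even k}" by auto
  have S1: "\<And>k. k \<in> {k. odd k} \<Longrightarrow> Suc k \<notin> {k. odd k}" by auto
  have b0: "prob (E I0) \<le> 2 * exp (-(real n * \<epsilon>\<^sup>2) / (8 * K\<^sup>2))"
    unfolding E_def by (rule E_bound[OF S0 _ _ K eps]) (auto simp: I0_def)
  have b1: "prob (E I1) \<le> 2 * exp (-(real n * \<epsilon>\<^sup>2) / (8 * K\<^sup>2))"
    unfolding E_def by (rule E_bound[OF S1 _ _ K eps]) (auto simp: I1_def)
  have "prob {\<omega>\<in>space M. real n * \<epsilon> \<le> \<bar>(\<Sum>k<n. W h k \<omega>) - real n * mh h\<bar>} \<le> prob (E I0 \<union> E I1)"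
    by (rule finite_measure_mono[OF sub]) (intro sets.Un E_sets)
  also have "\<dots> \<le> prob (E I0) + prob (E I1)" by (rule measure_Un_le) (simp_all add: E_sets)
  finally show ?thesis using b0 b1 by simp
qed

lemma slln:
  assumes K: "\<And>x y. \<bar>h x y\<bar> \<le> K" "0 < K"
  shows "AE \<omega> in M. (\<lambda>n. (\<Sum>k<n. W h k \<omega>) / real n) \<longlonglongrightarrow> mh h"
proof -
  have ev: "AE \<omega> in M. eventually (\<lambda>n. \<bar>(\<Sum>k<n. W h k \<omega>) / real n - mh h\<bar> < \<epsilon>) sequentially"
    if eps: "\<epsilon> > 0" for \<epsilon>
  proof -
    define A where "A n = {\<omega>\<in>space M. real n * \<epsilon> \<le> \<bar>(\<Sum>k<n. W h k \<omega>) - real n * mh h\<bar>}" for n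
    define c where "c = \<epsilon>\<^sup>2 / (8 * K\<^sup>2)"
    have c: "0 < c" unfolding c_def using eps K(2) by simp
    have A_sets: "A n \<in> sets M" for n unfolding A_def by measurable
    have summ: "summable (\<lambda>n. measure M (A n))"
    proof (rule summable_comparison_test')
      show "summable (\<lambda>n. 4 * exp (-c) ^ n)"
        by (intro summable_mult summable_geometric) (use c in simp)
      fix n :: nat
      have "exp (-(real n * \<epsilon>\<^sup>2) / (8 * K\<^sup>2)) = exp (real n * (-c))"
        unfolding c_def by (simp add: field_simps)
      also have "\<dots> = exp (-c) ^ n" by (rule exp_of_nat_mult)
      finally show "norm (measure M (A n)) \<le> 4 * exp (-c) ^ n"
        using dev_bound[OF K eps, of n] unfolding A_def by simp
    qed
    have "AE \<omega> in M. eventually (\<lambda>n. \<omega> \<in> space M - A n) sequentially"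
      by (rule borel_cantelli_AE1[OF A_sets _ summ]) (simp add: emeasure_eq_measure)
    then show ?thesis
    proof (rule eventually_mono)
      fix \<omega> assume "eventually (\<lambda>n. \<omega> \<in> space M - A n) sequentially"
      then have "eventually (\<lambda>n. \<omega> \<in> space M - A n \<and> 0 < n) sequentially"
        by (intro eventually_conj) (auto intro: eventually_gt_at_top)
      then show "eventually (\<lambda>n. \<bar>(\<Sum>k<n. W h k \<omega>) / real n - mh h\<bar> < \<epsilon>) sequentially"
      proof (rule eventually_mono)
        fix n assume H: "\<omega> \<in> space M - A n \<and> 0 < n"
        then have l: "\<bar>(\<Sum>k<n. W h k \<omega>) - real n * mh h\<bar> < real n * \<epsilon>" by (auto simp: A_def)
        have "(\<Sum>k<n. W h k \<omega>) / real n - mh h = ((\<Sum>k<n. W h k \<omega>) - real n * mh h) / real n"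
          using H by (simp add: field_simps)
        then show "\<bar>(\<Sum>k<n. W h k \<omega>) / real n - mh h\<bar> < \<epsilon>"
          using l H by (simp add: abs_divide divide_less_eq mult.commute)
      qed
    qed
  qed
  have "AE \<omega> in M. \<forall>j::nat. eventually (\<lambda>n. \<bar>(\<Sum>k<n. W h k \<omega>) / real n - mh h\<bar> < inverse (real (Suc j))) sequentially"
    by (subst AE_all_countable) (auto intro: ev)
  then show ?thesis
  proof (rule eventually_mono)
    fix \<omega> assume H: "\<forall>j::nat. eventually (\<lambda>n. \<bar>(\<Sum>k<n. W h k \<omega>) / real n - mh h\<bar> < inverse (real (Suc j))) sequentially"
    show "(\<lambda>n. (\<Sum>k<n. W h k \<omega>) / real n) \<longlonglongrightarrow> mh h"
    proof (rule tendstoI)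
      fix e :: real assume "0 < e"
      then obtain j where j: "inverse (real (Suc j)) < e" using reals_Archimedean by blast
      from H[rule_format, of j] show "eventually (\<lambda>n. dist ((\<Sum>k<n. W h k \<omega>) / real n) (mh h) < e) sequentially"
        by (rule eventually_mono) (use j in \<open>auto simp: dist_real_def\<close>)
    qed
  qed
qed

end


lemma gauss_real: "(\<Sum>j<m. real j) = real m * (real m - 1) / 2"
  by (induction m) (auto simp: field_simps)

locale det =
  fixes e :: "'a::finite \<Rightarrow> bool list" and xs :: "nat \<Rightarrow> 'a"
  assumes len: "\<And>x. 1 \<le> length (e x)"
begin

abbreviation s where "s \<equiv> sched e xs"
definition L where "L k = length (e (xs (s k)))"
definition Bd where "Bd = Max (range (\<lambda>x. length (e x)))"

lemma s_Suc: "s (Suc k) = s k + L k" by (simp add: L_def)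
declare sched.simps(2)[simp del]
lemma L_pos: "1 \<le> L k" unfolding L_def by (rule len)
lemma L_le: "L k \<le> Bd" unfolding L_def Bd_def by (rule Max_ge) auto
lemma Bd_pos: "1 \<le> Bd" using L_pos[of 0] L_le[of 0] by simp
lemma s_strict: "strict_mono s"
  by (rule strict_mono_Suc_iff[THEN iffD2]) (auto simp: s_Suc intro: order.strict_trans2[OF _ L_pos] dest: spec[of _ 0] )

lemma s_mono: "m \<le> n \<Longrightarrow> s m \<le> s n" using s_strict by (simp add: strict_mono_less_eq)
lemma s_less: "m < n \<Longrightarrow> s m < s n" using s_strict by (simp add: strict_mono_less)
lemma s_ge: "n \<le> s n" using s_strict by (rule strict_mono_imp_increasing)
lemma s_le: "s n \<le> Bd * n"
  by (induction n) (auto simp: s_Suc intro: add_mono L_le order.trans[OF add_mono[OF _ L_le]])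
lemma s_sum: "s n = (\<Sum>k<n. L k)"
  by (induction n) (auto simp: s_Suc)

lemma recv:
  assumes "s n \<le> t" "t < s (Suc n)"
  shows "recv_index e xs t = s (n - 1)"
proof (cases n)
  case 0
  then show ?thesis using assms by (simp add: recv_index_def)
next
  case (Suc m)
  have "s 1 \<le> s n" using Suc s_mono by simp
  then have nlt: "\<not> t < s 1" using assms by simp
  have "(THE k. 1 \<le> k \<and> s k \<le> t \<and> t < s (Suc k)) = n"
  proof (rule the_equality)
    show "1 \<le> n \<and> s n \<le> t \<and> t < s (Suc n)" using assms Suc by simp
  next
    fix k assume k: "1 \<le> k \<and> s k \<le> t \<and> t < s (Suc k)"
    show "k = n"
    proof (rule ccontr)
      assume "k \<noteq> n"
      then consider "k < n" | "n < k" by linarith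
      then show False
      proof cases
        case 1 then have "s (Suc k) \<le> s n" using s_mono by simp
        then show False using k assms by simp
      next
        case 2 then have "s (Suc n) \<le> s k" using s_mono by simp
        then show False using k assms by simp
      qed
    qed
  qed
  then show ?thesis using nlt by (simp add: recv_index_def)
qed

lemma age_eq:
  assumes "s n \<le> t" "t < s (Suc n)"
  shows "age e xs t = real t - real (s (n - 1))"
  using recv[OF assms] by (simp add: age_def)

definition N where "N T = (LEAST n. T < s (Suc n))"

lemma N: "s (N T) \<le> T" "T < s (Suc (N T))"
proof -
  have ex: "T < s (Suc T)" using s_ge[of "Suc T"] by simp
  show 2: "T < s (Suc (N T))" unfolding N_def by (rule LeastI[where P="\<lambda>n. T < s (Suc n)", OF ex])
  show "s (N T) \<le> T"
  proof (cases "N T")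
    case 0 then show ?thesis by simp
  next
    case (Suc m)
    have "\<not> T < s (Suc m)"
    proof
      assume "T < s (Suc m)"
      then have "N T \<le> m" unfolding N_def by (rule Least_le)
      then show False using Suc by simp
    qed
    then show ?thesis using Suc by simp
  qed
qed

lemma age_bounds: "0 \<le> age e xs t" "age e xs t \<le> 2 * real Bd"
proof -
  let ?n = "N t"
  have a: "age e xs t = real t - real (s (?n - 1))" using age_eq N by blast
  have "s (?n - 1) \<le> s ?n" by (rule s_mono) simp
  then show "0 \<le> age e xs t" using a N(1)[of t] by simp
  have "s (Suc ?n) \<le> s (?n - 1) + 2 * Bd"
  proof (cases ?n)
    case 0 then show ?thesis using L_le[of 0] by (simp add: s_Suc)
  next
    case (Suc m) then show ?thesis using L_le[of m] L_le[of "Suc m"] by (simp add: s_Suc)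
  qed
  then show "age e xs t \<le> 2 * real Bd" using a N(2)[of t] by simp
qed

definition D where "D n = (if n = 0 then 0 else L (n - 1))"

lemma sD: "s n - s (n - 1) = D n"
  by (cases n) (auto simp: D_def s_Suc)

lemma block:
  "(\<Sum>t\<in>{s n..<s (Suc n)}. age e xs t) = real (L n) * real (D n) + real (L n) * (real (L n) - 1) / 2"
proof -
  have img: "{s n..<s (Suc n)} = (\<lambda>j. s n + j) ` {..<L n}"
    apply (auto simp: s_Suc image_iff)
    subgoal for x by (rule bexI[of _ "x - s n"]) auto
    done
  have le: "s (n - 1) \<le> s n" by (rule s_mono) simp
  have "(\<Sum>t\<in>{s n..<s (Suc n)}. age e xs t) = (\<Sum>j<L n. age e xs (s n + j))"
    unfolding img by (subst sum.reindex) (auto simp: inj_on_def)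
  also have "\<dots> = (\<Sum>j<L n. real (D n) + real j)"
  proof (rule sum.cong[OF refl])
    fix j assume "j \<in> {..<L n}"
    then have "age e xs (s n + j) = real (s n + j) - real (s (n - 1))"
      by (intro age_eq) (auto simp: s_Suc)
    then show "age e xs (s n + j) = real (D n) + real j"
      using le sD[of n] by (simp add: of_nat_diff)
  qed
  also have "\<dots> = real (L n) * real (D n) + real (L n) * (real (L n) - 1) / 2"
    by (simp add: sum.distrib gauss_real)
  finally show ?thesis .
qed

definition Sa where "Sa T = (\<Sum>t<T. age e xs t)"

lemma Sa_s: "Sa (s n) = (\<Sum>k<n. real (L k) * real (D k) + real (L k) * (real (L k) - 1) / 2)"
proof (induction n)
  case 0 then show ?case by (simp add: Sa_def)
next
  case (Suc n)
  have "Sa (s (Suc n)) = Sa (s n) + (\<Sum>t\<in>{s n..<s (Suc n)}. age e xs t)"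
    unfolding Sa_def lessThan_atLeast0
    by (rule sum.atLeastLessThan_concat[symmetric]) (auto intro: s_mono)
  then show ?case using Suc block by simp
qed

lemma sumLD: "(\<Sum>k<n. real (L k) * real (D k)) =
   (\<Sum>k<n. real (L k) * real (L (Suc k))) - (if n = 0 then 0 else real (L (n - 1)) * real (L n))"
  by (induction n) (auto simp: D_def)

lemma Sa_sum1: "(\<Sum>t=1..T. age e xs t) = Sa (Suc T)"
proof (induction T)
  case 0
  have "0 < s 1" using L_pos[of 0] by (simp add: s_Suc)
  then have "age e xs 0 = 0" by (simp add: age_def recv_index_def)
  then show ?case by (simp add: Sa_def)
next
  case (Suc T) then show ?case by (simp add: Sa_def)
qed

end


context det begin

lemma E1_bound:
  "0 \<le> Sa (Suc T) - Sa (s (N (Suc T))) \<and> Sa (Suc T) - Sa (s (N (Suc T))) \<le> 2 * real Bd * real Bd"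
proof -
  let ?m = "N (Suc T)"
  have le: "s ?m \<le> Suc T" "Suc T < s (Suc ?m)" using N by auto
  have eq: "Sa (Suc T) - Sa (s ?m) = (\<Sum>t\<in>{s ?m..<Suc T}. age e xs t)"
  proof -
    have "Sa (Suc T) = Sa (s ?m) + (\<Sum>t\<in>{s ?m..<Suc T}. age e xs t)"
      unfolding Sa_def lessThan_atLeast0
      by (rule sum.atLeastLessThan_concat[symmetric]) (use le in auto)
    then show ?thesis by simp
  qed
  have c: "card {s ?m..<Suc T} \<le> Bd" using le L_le[of ?m] by (simp add: s_Suc)
  have "(\<Sum>t\<in>{s ?m..<Suc T}. age e xs t) \<le> real (card {s ?m..<Suc T}) * (2 * real Bd)"
    by (rule sum_bounded_above) (simp add: age_bounds)
  also have "\<dots> \<le> real Bd * (2 * real Bd)" using c by (intro mult_right_mono) auto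
  finally have u: "(\<Sum>t\<in>{s ?m..<Suc T}. age e xs t) \<le> 2 * real Bd * real Bd" by simp
  have "0 \<le> (\<Sum>t\<in>{s ?m..<Suc T}. age e xs t)" by (rule sum_nonneg) (simp add: age_bounds)
  then show ?thesis using u unfolding eq by simp
qed

lemma E2_bound: "\<bar>real T - real (s (N (Suc T)))\<bar> \<le> real Bd"
proof -
  let ?m = "N (Suc T)"
  have le: "s ?m \<le> Suc T" "Suc T < s (Suc ?m)" using N by auto
  then show ?thesis using L_le[of ?m] Bd_pos by (simp add: s_Suc)
qed

lemma M_lim: "filterlim (\<lambda>T. N (Suc T)) at_top sequentially"
proof (subst filterlim_at_top, intro allI)
  fix Z :: nat
  show "eventually (\<lambda>T. Z \<le> N (Suc T)) sequentially"
    unfolding eventually_sequentially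
  proof (intro exI[of _ "Bd * Suc Z"] allI impI)
    fix T assume T: "Bd * Suc Z \<le> T"
    have "Suc T < s (Suc (N (Suc T)))" using N by auto
    also have "\<dots> \<le> Bd * Suc (N (Suc T))" by (rule s_le)
    finally have "Bd * Suc Z < Bd * Suc (N (Suc T))" using T by linarith
    then show "Z \<le> N (Suc T)" by (simp add: mult_less_cancel1)
  qed
qed

lemma null_over_M:
  assumes "\<And>T. \<bar>E T\<bar> \<le> K"
  shows "(\<lambda>T. E T / real (N (Suc T))) \<longlonglongrightarrow> 0"
proof (rule Lim_null_comparison)
  show "eventually (\<lambda>T. norm (E T / real (N (Suc T))) \<le> K / real (N (Suc T))) sequentially"
    using assms by (auto simp: divide_right_mono abs_divide)
  have "(\<lambda>n. K / real n) \<longlonglongrightarrow> 0" by (rule lim_const_over_n)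
  from filterlim_compose[OF this M_lim] show "(\<lambda>T. K / real (N (Suc T))) \<longlonglongrightarrow> 0" .
qed

lemma det_limit:
  assumes T1: "(\<lambda>n. (\<Sum>k<n. real (L k)) / real n) \<longlonglongrightarrow> \<mu>"
    and T2: "(\<lambda>n. (\<Sum>k<n. real (L k) ^ 2) / real n) \<longlonglongrightarrow> q"
    and T3: "(\<lambda>n. (\<Sum>k<n. real (L k) * real (L (Suc k))) / real n) \<longlonglongrightarrow> p"
    and mu: "\<mu> > 0"
  shows "(\<lambda>T. (1 / real T) * (\<Sum>t=1..T. age e xs t)) \<longlonglongrightarrow> (p + q / 2 - \<mu> / 2) / \<mu>"
proof -
  define r where "r n = (if n = 0 then 0 else real (L (n - 1)) * real (L n))" for n
  define g where "g n = Sa (s n) / real n" for n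
  define h where "h n = real (s n) / real n" for n
  have r_bd: "\<bar>r n\<bar> \<le> real Bd * real Bd" for n
    unfolding r_def using L_le[of n] L_le[of "n - 1"] by (auto intro: mult_mono)
  have r0: "(\<lambda>n. r n / real n) \<longlonglongrightarrow> 0"
  proof (rule Lim_null_comparison)
    show "eventually (\<lambda>n. norm (r n / real n) \<le> (real Bd * real Bd) / real n) sequentially"
      using r_bd by (auto simp: divide_right_mono abs_divide)
    show "(\<lambda>n. (real Bd * real Bd) / real n) \<longlonglongrightarrow> 0" by (rule lim_const_over_n)
  qed
  have geq: "g n = (\<Sum>k<n. real (L k) * real (L (Suc k))) / real n - r n / real n
      + ((\<Sum>k<n. real (L k) ^ 2) / real n) / 2 - ((\<Sum>k<n. real (L k)) / real n) / 2" for n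
  proof -
    have "Sa (s n) = (\<Sum>k<n. real (L k) * real (D k)) + ((\<Sum>k<n. real (L k) ^ 2) / 2 - (\<Sum>k<n. real (L k)) / 2)"
      unfolding Sa_s
      by (simp add: sum.distrib sum_subtractf sum_divide_distrib right_diff_distrib power2_eq_square diff_divide_distrib)
    also have "\<dots> = (\<Sum>k<n. real (L k) * real (L (Suc k))) - r n + ((\<Sum>k<n. real (L k) ^ 2) / 2 - (\<Sum>k<n. real (L k)) / 2)"
      unfolding sumLD r_def by simp
    finally have E: "Sa (s n) = (\<Sum>k<n. real (L k) * real (L (Suc k))) - r n + ((\<Sum>k<n. real (L k) ^ 2) / 2 - (\<Sum>k<n. real (L k)) / 2)" .
    show ?thesis
    proof (cases "n = 0")
      case True then show ?thesis by (simp add: g_def r_def)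
    next
      case False then show ?thesis unfolding g_def E by (simp add: field_simps)
    qed
  qed
  have glim: "g \<longlonglongrightarrow> p - 0 + q / 2 - \<mu> / 2"
    unfolding geq by (intro tendsto_intros T1 T2 T3 r0) simp_all
  have "h = (\<lambda>n. (\<Sum>k<n. real (L k)) / real n)" by (simp add: h_def s_sum fun_eq_iff)
  then have hlim: "h \<longlonglongrightarrow> \<mu>" using T1 by simp
  define F where "F T = (g (N (Suc T)) + (Sa (Suc T) - Sa (s (N (Suc T)))) / real (N (Suc T))) /
       (h (N (Suc T)) + (real T - real (s (N (Suc T)))) / real (N (Suc T)))" for T
  have Flim: "F \<longlonglongrightarrow> (p + q / 2 - \<mu> / 2) / \<mu>"
  proof -
    have a: "(\<lambda>T. g (N (Suc T))) \<longlonglongrightarrow> p - 0 + q / 2 - \<mu> / 2"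
      by (rule filterlim_compose[OF glim M_lim])
    have b: "(\<lambda>T. h (N (Suc T))) \<longlonglongrightarrow> \<mu>"
      by (rule filterlim_compose[OF hlim M_lim])
    have c: "(\<lambda>T. (Sa (Suc T) - Sa (s (N (Suc T)))) / real (N (Suc T))) \<longlonglongrightarrow> 0"
      by (rule null_over_M[where K="2 * real Bd * real Bd"]) (use E1_bound in auto)
    have d: "(\<lambda>T. (real T - real (s (N (Suc T)))) / real (N (Suc T))) \<longlonglongrightarrow> 0"
      by (rule null_over_M[where K="real Bd"]) (use E2_bound in auto)
    have "F \<longlonglongrightarrow> (p - 0 + q / 2 - \<mu> / 2 + 0) / (\<mu> + 0)"
      unfolding F_def by (intro tendsto_intros a b c d) (use mu in auto)
    then show ?thesis by simp
  qed
  have ev: "eventually (\<lambda>T. F T = (1 / real T) * (\<Sum>t=1..T. age e xs t)) sequentially"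
  proof -
    have "eventually (\<lambda>T. 1 \<le> N (Suc T)) sequentially"
      using M_lim by (simp add: filterlim_at_top)
    moreover have "eventually (\<lambda>T. 1 \<le> T) sequentially" by (rule eventually_ge_at_top)
    ultimately show ?thesis
    proof eventually_elim
      case (elim T)
      then show ?case unfolding F_def g_def h_def Sa_sum1 by (simp add: field_simps)
    qed
  qed
  show ?thesis using Flim tendsto_cong[OF ev] by simp
qed

end


lemma pmf_sum1: "(\<Sum>y\<in>UNIV. pmf (P::'a::finite pmf) y) = 1"
  by (rule sum_pmf_eq_1) auto

lemma exp_fin: "measure_pmf.expectation (P::'a::finite pmf) f = (\<Sum>x\<in>UNIV. pmf P x * f x)"
  by (subst integral_measure_pmf_real[where A=UNIV]) (auto simp: mult.commute)

lemma inner_sum: "(\<Sum>y\<in>UNIV. a * pmf (P::'a::finite pmf) y * c) = a * c"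
proof -
  have "(\<Sum>y\<in>UNIV. a * pmf P y * c) = (\<Sum>y\<in>UNIV. (a * c) * pmf P y)"
    by (simp add: mult_ac)
  also have "\<dots> = (a * c) * (\<Sum>y\<in>UNIV. pmf P y)"
    by (rule sum_distrib_left[symmetric])
  finally have "(\<Sum>y\<in>UNIV. a * pmf P y * c) = (a * c) * (\<Sum>y\<in>UNIV. pmf P y)" .
  then show ?thesis by (simp add: pmf_sum1)
qed

theorem theorem1:
  fixes M :: "'w measure" and X :: "nat \<Rightarrow> 'w \<Rightarrow> 'a::finite"
    and P :: "'a pmf" and e :: "'a \<Rightarrow> bool list"
  assumes "CARD('a) \<ge> 2"
    and "prob_space M"
    and "prob_space.indep_vars M (\<lambda>_. count_space UNIV) X UNIV"
    and "\<And>t. distr M (count_space UNIV) (X t) = measure_pmf P"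
    and "prefix_free_code e"
    and "\<And>x. length (e x) \<ge> 1"
  shows "AE \<omega> in M. avg_age e (\<lambda>t. X t \<omega>) =
           ereal (measure_pmf.expectation P (\<lambda>x. real (length (e x)))
             + measure_pmf.expectation P (\<lambda>x. (real (length (e x)))\<^sup>2)
               / (2 * measure_pmf.expectation P (\<lambda>x. real (length (e x))))
             - 1 / 2)"
proof -
  interpret prb M X P e
    by (rule prb.intro[OF assms(2)], unfold_locales) (use assms in auto)
  define l where "l x = real (length (e x))" for x
  define Lm where "Lm = Max (range l)"
  have l_le: "l x \<le> Lm" for x unfolding Lm_def by (rule Max_ge) auto
  have l_ge: "1 \<le> l x" for x unfolding l_def using assms(6)[of x] by simp
  have Lm: "1 \<le> Lm" using l_le[of undefined] l_ge[of undefined] by simp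
  define h1 where "h1 x y = l x" for x y :: 'a
  define h2 where "h2 x y = (l x)\<^sup>2" for x y :: 'a
  define h3 where "h3 x y = l x * l y" for x y :: 'a
  have b1: "\<bar>h1 x y\<bar> \<le> Lm" for x y using l_le[of x] l_ge[of x] by (simp add: h1_def)
  have b2: "\<bar>h2 x y\<bar> \<le> Lm\<^sup>2" for x y using l_le[of x] l_ge[of x] by (simp add: h2_def power_mono)
  have b3: "\<bar>h3 x y\<bar> \<le> Lm * Lm" for x y
    using l_le[of x] l_ge[of x] l_le[of y] l_ge[of y] by (simp add: h3_def abs_mult mult_mono)
  have A1: "AE \<omega> in M. (\<lambda>n. (\<Sum>k<n. W h1 k \<omega>) / real n) \<longlonglongrightarrow> mh h1"
    by (rule slln[OF b1]) (use Lm in simp)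
  have A2: "AE \<omega> in M. (\<lambda>n. (\<Sum>k<n. W h2 k \<omega>) / real n) \<longlonglongrightarrow> mh h2"
    by (rule slln[OF b2]) (use Lm in simp)
  have A3: "AE \<omega> in M. (\<lambda>n. (\<Sum>k<n. W h3 k \<omega>) / real n) \<longlonglongrightarrow> mh h3"
    by (rule slln[OF b3]) (use Lm in simp)
  define \<mu> where "\<mu> = measure_pmf.expectation P l"
  define q where "q = measure_pmf.expectation P (\<lambda>x. (l x)\<^sup>2)"
  have m1: "mh h1 = \<mu>"
  proof -
    have "mh h1 = (\<Sum>x\<in>UNIV. pmf P x * l x * (\<Sum>y\<in>UNIV. pmf P y))"
      unfolding mh_def h1_def by (simp add: sum_distrib_left mult_ac)
    then show ?thesis by (simp add: pmf_sum1 \<mu>_def exp_fin)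
  qed
  have m2: "mh h2 = q"
  proof -
    have "mh h2 = (\<Sum>x\<in>UNIV. pmf P x * (l x)\<^sup>2)"
      unfolding mh_def h2_def by (simp add: inner_sum)
    then show ?thesis by (simp add: q_def exp_fin)
  qed
  have m3: "mh h3 = \<mu> * \<mu>"
    unfolding mh_def h3_def \<mu>_def exp_fin sum_product by (simp add: mult_ac)
  have mu_pos: "0 < \<mu>"
  proof -
    have "(\<Sum>x\<in>UNIV. pmf P x * 1) \<le> (\<Sum>x\<in>UNIV. pmf P x * l x)"
      by (rule sum_mono) (rule mult_left_mono[OF l_ge pmf_nonneg])
    then show ?thesis using pmf_sum1[of P] by (simp add: \<mu>_def exp_fin)
  qed
  have "AE \<omega> in M. ((\<lambda>n. (\<Sum>k<n. W h1 k \<omega>) / real n) \<longlonglongrightarrow> mh h1) \<and>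
      ((\<lambda>n. (\<Sum>k<n. W h2 k \<omega>) / real n) \<longlonglongrightarrow> mh h2) \<and> ((\<lambda>n. (\<Sum>k<n. W h3 k \<omega>) / real n) \<longlonglongrightarrow> mh h3)"
    using A1 A2 A3 by (intro eventually_conj)
  then show ?thesis
  proof (rule eventually_mono)
    fix \<omega> assume H: "((\<lambda>n. (\<Sum>k<n. W h1 k \<omega>) / real n) \<longlonglongrightarrow> mh h1) \<and>
      ((\<lambda>n. (\<Sum>k<n. W h2 k \<omega>) / real n) \<longlonglongrightarrow> mh h2) \<and> ((\<lambda>n. (\<Sum>k<n. W h3 k \<omega>) / real n) \<longlonglongrightarrow> mh h3)"
    define xs where "xs = (\<lambda>t. X t \<omega>)"
    interpret D: det e xs by unfold_locales (use assms(6) in auto)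
    have YL: "l (Y k \<omega>) = real (D.L k)" for k
      using D.L_def[of k] by (simp add: Y_def l_def xs_def)
    have T1: "(\<lambda>n. (\<Sum>k<n. real (D.L k)) / real n) \<longlonglongrightarrow> \<mu>"
      using H m1 by (simp add: W_def h1_def YL)
    have T2: "(\<lambda>n. (\<Sum>k<n. real (D.L k) ^ 2) / real n) \<longlonglongrightarrow> q"
      using H m2 by (simp add: W_def h2_def YL)
    have T3: "(\<lambda>n. (\<Sum>k<n. real (D.L k) * real (D.L (Suc k))) / real n) \<longlonglongrightarrow> \<mu> * \<mu>"
      using H m3 by (simp add: W_def h3_def YL)
    have lim: "(\<lambda>T. (1 / real T) * (\<Sum>t=1..T. age e xs t)) \<longlonglongrightarrow> (\<mu> * \<mu> + q / 2 - \<mu> / 2) / \<mu>"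
      by (rule D.det_limit[OF T1 T2 T3 mu_pos])
    have val: "(\<mu> * \<mu> + q / 2 - \<mu> / 2) / \<mu> = \<mu> + q / (2 * \<mu>) - 1 / 2"
      using mu_pos by (simp add: field_simps)
    have "avg_age e xs = ereal (\<mu> + q / (2 * \<mu>) - 1 / 2)"
      unfolding avg_age_def val[symmetric] by (rule lim_imp_Limsup[OF _ tendsto_ereal[OF lim]]) simp
    then show "avg_age e (\<lambda>t. X t \<omega>) =
           ereal (measure_pmf.expectation P (\<lambda>x. real (length (e x)))
             + measure_pmf.expectation P (\<lambda>x. (real (length (e x)))\<^sup>2)
               / (2 * measure_pmf.expectation P (\<lambda>x. real (length (e x))))
             - 1 / 2)"
      unfolding xs_def \<mu>_def q_def l_def .
  qed
qed

end
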